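(* Let $T\in\mathcal M_n$, and let $f,g:[0,\infty)\to[0,\infty)$ be continuous with $f(t)g(t)=t$ for all $t\ge0$. Then for all vectors $x,y\in\mathbb C^n$, \[|\langle\mathfrak RTx,y\rangle|\le\frac12\sqrt{\big\langle(f^2(|T|)+f^2(|T^*|))x,x\big\rangle\,\big\langle(g^2(|T|)+g^2(|T^*|))y,y\big\rangle}\] and \[|\langle\mathfrak ITx,y\rangle|\le\frac12\sqrt{\big\langle(f^2(|T|)+f^2(|T^*|))x,x\big\rangle\,\big\langle(g^2(|T|)+g^2(|T^*|))y,y\big\rangle}.\]
   Context: $\mathcal M_n$ denotes the algebra of $n\times n$ complex matrices. $|X|=(X^*X)^{1/2}$; functions of positive semidefinite matrices are defined by functional calculus. $\mathfrak RT=\frac{T+T^*}{2}$, $\mathfrak IT=\frac{T-T^*}{2i}$. $\langle\cdot,\cdot\rangle$ is the standard inner product on $\mathbb C^n$. *)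

theory Defs
  imports "HOL-Analysis.Analysis"
begin

definition adj :: "complex^'n^'n \<Rightarrow> complex^'n^'n" where
  "adj A = (\<chi> i j. cnj (A $ j $ i))"

definition unitary_mat :: "complex^'n^'n \<Rightarrow> bool" where
  "unitary_mat U \<longleftrightarrow> adj U ** U = mat 1"

definition diag_mat :: "('n \<Rightarrow> complex) \<Rightarrow> complex^'n^'n" where
  "diag_mat d = (\<chi> i j. if i = j then d i else 0)"

text \<open>Functional calculus for Hermitian matrices: if A = U diag(d) U* with U unitary and
  d real, then f(A) = U diag(f(d)) U*. (Well defined for Hermitian A.)\<close>
definition mat_fun :: "(real \<Rightarrow> real) \<Rightarrow> complex^'n^'n \<Rightarrow> complex^'n^'n" where
  "mat_fun f A = (SOME B. \<exists>U d. unitary_mat U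
       \<and> A = U ** diag_mat (\<lambda>i. complex_of_real (d i)) ** adj U
       \<and> B = U ** diag_mat (\<lambda>i. complex_of_real (f (d i))) ** adj U)"

definition mat_abs :: "complex^'n^'n \<Rightarrow> complex^'n^'n" where
  "mat_abs T = mat_fun sqrt (adj T ** T)"

definition re_part :: "complex^'n^'n \<Rightarrow> complex^'n^'n" where
  "re_part T = (\<chi> i j. (T $ i $ j + adj T $ i $ j) / 2)"

definition im_part :: "complex^'n^'n \<Rightarrow> complex^'n^'n" where
  "im_part T = (\<chi> i j. (T $ i $ j - adj T $ i $ j) / (2 * \<i>))"

text \<open>Standard inner product, linear in the first argument.\<close>
definition cinner :: "complex^'n \<Rightarrow> complex^'n \<Rightarrow> complex" where
  "cinner x y = (\<Sum>i\<in>UNIV. x $ i * cnj (y $ i))"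

end

theory Submission imports Defs
begin

lemma mmult_comp: "(A ** B) $ i $ j = (\<Sum>k\<in>UNIV. A$i$k * B$k$j)"
  by (simp add: matrix_matrix_mult_def)

lemma mvec_comp: "(A *v x) $ i = (\<Sum>k\<in>UNIV. A$i$k * x$k)"
  by (simp add: matrix_vector_mult_def)

lemma adj_comp[simp]: "adj A $ i $ j = cnj (A $ j $ i)"
  by (simp add: adj_def)

lemma adj_adj[simp]: "adj (adj A) = A"
  by (simp add: vec_eq_iff)

lemma adj_mult: "adj (A ** B) = adj B ** adj A"
  by (simp add: vec_eq_iff mmult_comp mult.commute)

lemma adj_mat1[simp]: "adj (mat 1) = mat 1"
  by (simp add: vec_eq_iff mat_def)

lemma unitary_right: "unitary_mat U \<Longrightarrow> U ** adj U = mat 1"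
  unfolding unitary_mat_def using matrix_left_right_inverse by blast

lemma unitary_adj: "unitary_mat U \<Longrightarrow> unitary_mat (adj U)"
  unfolding unitary_mat_def using unitary_right[unfolded unitary_mat_def] by simp

lemma unitary_mult: "unitary_mat U \<Longrightarrow> unitary_mat V \<Longrightarrow> unitary_mat (U ** V)"
  unfolding unitary_mat_def adj_mult
  by (metis matrix_mul_assoc matrix_mul_lid)

lemma unitary_one: "unitary_mat (mat 1)"
  by (simp add: unitary_mat_def)

lemma cinner_adj: "cinner (A *v x) y = cinner x (adj A *v y)"
proof -
  have "cinner (A *v x) y = (\<Sum>i\<in>UNIV. \<Sum>k\<in>UNIV. A$i$k * x$k * cnj (y$i))"
    unfolding cinner_def mvec_comp by (simp add: sum_distrib_right)
  also have "\<dots> = (\<Sum>k\<in>UNIV. \<Sum>i\<in>UNIV. A$i$k * x$k * cnj (y$i))"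
    by (rule sum.swap)
  also have "\<dots> = cinner x (adj A *v y)"
    unfolding cinner_def mvec_comp by (simp add: sum_distrib_left cnj_sum mult_ac)
  finally show ?thesis .
qed

lemma diag_comp[simp]: "diag_mat d $ i $ j = (if i = j then d i else 0)"
  by (simp add: diag_mat_def)

lemma mult_diag_right: "(X ** diag_mat d) $ i $ j = X $ i $ j * d j"
  by (simp add: mmult_comp if_distrib if_distribR sum.delta cong: if_cong)

lemma mult_diag_left: "(diag_mat d ** X) $ i $ j = d i * X $ i $ j"
  by (simp add: mmult_comp if_distrib if_distribR sum.delta cong: if_cong)

lemma diag_mvec: "(diag_mat d *v x) $ i = d i * x $ i"
  by (simp add: mvec_comp if_distrib if_distribR sum.delta cong: if_cong)

lemma cinner_add_left: "cinner (x + y) z = cinner x z + cinner y z"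
  by (simp add: cinner_def distrib_right sum.distrib)

lemma cinner_diff_left: "cinner (x - y) z = cinner x z - cinner y z"
  by (simp add: cinner_def left_diff_distrib sum_subtractf)

lemma cinner_scale_left: "cinner (c *s x) z = c * cinner x z"
  by (simp add: cinner_def sum_distrib_left mult_ac)

lemma Re_cinner: "Re (cinner x y) = inner x y"
  by (simp add: cinner_def inner_vec_def Re_sum inner_complex_def)


lemma cinner_scale_right: "cinner x (c *s y) = cnj c * cinner x y"
  by (simp add: cinner_def sum_distrib_left mult_ac)

lemma cinner_self_norm: "Re (cinner x x) = (norm x)^2"
  by (simp add: Re_cinner power2_norm_eq_inner)

lemma cinner_self_real: "cinner x x = of_real (Re (cinner x x))"
  unfolding cinner_def by (simp add: complex_eq_iff Im_sum)

lemma cinner_cs: "cmod (cinner x y) \<le> norm x * norm y"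
proof (cases "cinner x y = 0")
  case True then show ?thesis by simp
next
  case False
  define c where "c = cinner x y"
  define w where "w = cnj c / of_real (cmod c)"
  have cm: "cmod w = 1" using False by (simp add: w_def c_def norm_divide)
  have "cinner (w *s x) y = w * c" by (simp add: cinner_scale_left c_def)
  also have "w * c = of_real (cmod c)"
    using False complex_norm_square[of c] unfolding w_def c_def[symmetric]
    by (simp add: field_simps power2_eq_square)
  finally have "cinner (w *s x) y = of_real (cmod c)" .
  hence "cmod c = inner (w *s x) y" by (metis Re_cinner Re_complex_of_real)
  also have "\<dots> \<le> norm (w *s x) * norm y" by (rule norm_cauchy_schwarz)
  also have "norm (w *s x) = norm x"
  proof -
    have "(norm (w *s x))^2 = Re (cinner (w *s x) (w *s x))" by (simp add: cinner_self_norm)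
    also have "\<dots> = Re (w * cnj w * cinner x x)" by (simp add: cinner_scale_left cinner_scale_right mult_ac)
    also have "w * cnj w = 1" using cm complex_norm_square[of w] by simp
    finally have "(norm (w *s x))^2 = (norm x)^2" by (simp add: cinner_self_norm)
    thus ?thesis by (simp add: power2_eq_iff_nonneg)
  qed
  finally show ?thesis by (simp add: c_def)
qed

lemma diag_commute_fun:
  assumes "W ** diag_mat (\<lambda>i. complex_of_real (d i)) = diag_mat (\<lambda>i. complex_of_real (e i)) ** W"
  shows "W ** diag_mat (\<lambda>i. complex_of_real (f (d i))) = diag_mat (\<lambda>i. complex_of_real (f (e i))) ** W"
proof -
  { fix i j
    have "W$i$j * of_real (d j) = of_real (e i) * W$i$j"
      using assms by (metis mult_diag_left mult_diag_right)
    hence "W$i$j * of_real (f (d j)) = of_real (f (e i)) * W$i$j"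
      by (cases "W$i$j = 0") (auto simp: mult.commute)
  }
  thus ?thesis by (simp add: vec_eq_iff mult_diag_left mult_diag_right)
qed

lemma unitary_cancel:
  assumes "unitary_mat U"
  shows "adj U ** (U ** X) = X" "U ** (adj U ** X) = X"
  using assms unitary_right[OF assms] unfolding unitary_mat_def
  by (simp_all add: matrix_mul_assoc)

lemma mat_fun_unique:
  assumes U: "unitary_mat U" and V: "unitary_mat V"
    and eq: "U ** diag_mat (\<lambda>i. complex_of_real (d i)) ** adj U = V ** diag_mat (\<lambda>i. complex_of_real (e i)) ** adj V"
  shows "U ** diag_mat (\<lambda>i. complex_of_real (f (d i))) ** adj U = V ** diag_mat (\<lambda>i. complex_of_real (f (e i))) ** adj V"
proof -
  define W where "W = adj V ** U"
  define Dd where "Dd = diag_mat (\<lambda>i. complex_of_real (d i))"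
  define De where "De = diag_mat (\<lambda>i. complex_of_real (e i))"
  define Fd where "Fd = diag_mat (\<lambda>i. complex_of_real (f (d i)))"
  define Fe where "Fe = diag_mat (\<lambda>i. complex_of_real (f (e i)))"
  note c = unitary_cancel[OF U] unitary_cancel[OF V]
  have UU: "adj U ** U = mat 1" using U unitary_mat_def by blast
  have eq': "U ** (Dd ** adj U) = V ** (De ** adj V)"
    using eq by (simp add: Dd_def De_def matrix_mul_assoc)
  have "W ** Dd = adj V ** (U ** (Dd ** adj U)) ** U"
    by (simp add: W_def matrix_mul_assoc[symmetric] UU)
  also have "\<dots> = De ** W" unfolding eq' by (simp add: W_def matrix_mul_assoc[symmetric] c)
  finally have "W ** Fd = Fe ** W" unfolding Dd_def De_def Fd_def Fe_def by (rule diag_commute_fun)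
  hence "V ** (W ** Fd) ** adj U = V ** (Fe ** W) ** adj U" by simp
  thus ?thesis
    unfolding Fd_def[symmetric] Fe_def[symmetric]
    by (simp add: W_def matrix_mul_assoc[symmetric] c unitary_right[OF U])
qed

lemma mat_fun_eq:
  assumes U: "unitary_mat U" and A: "A = U ** diag_mat (\<lambda>i. complex_of_real (d i)) ** adj U"
  shows "mat_fun f A = U ** diag_mat (\<lambda>i. complex_of_real (f (d i))) ** adj U"
proof -
  let ?P = "\<lambda>B. \<exists>U d. unitary_mat U
       \<and> A = U ** diag_mat (\<lambda>i. complex_of_real (d i)) ** adj U
       \<and> B = U ** diag_mat (\<lambda>i. complex_of_real (f (d i))) ** adj U"
  have "?P (U ** diag_mat (\<lambda>i. complex_of_real (f (d i))) ** adj U)" using U A by blast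
  hence "?P (SOME B. ?P B)" by (rule someI)
  then obtain V e where V: "unitary_mat V" "A = V ** diag_mat (\<lambda>i. complex_of_real (e i)) ** adj V"
    and B: "(SOME B. ?P B) = V ** diag_mat (\<lambda>i. complex_of_real (f (e i))) ** adj V" by blast
  have "mat_fun f A = V ** diag_mat (\<lambda>i. complex_of_real (f (e i))) ** adj V"
    unfolding mat_fun_def using B by simp
  also have "\<dots> = U ** diag_mat (\<lambda>i. complex_of_real (f (d i))) ** adj U"
    by (rule mat_fun_unique[OF V(1) U]) (use A V in simp)
  finally show ?thesis .
qed

definition rot :: "'n \<Rightarrow> 'n \<Rightarrow> real \<Rightarrow> complex \<Rightarrow> complex^'n^'n" where
  "rot i j a z = (\<chi> p q. if q = i then (if p = i then of_real a else if p = j then z else 0)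
     else if q = j then (if p = i then - cnj z else if p = j then of_real a else 0)
     else (if p = q then 1 else 0))"

lemma sum_two:
  assumes "i \<noteq> j"
  shows "(\<Sum>p\<in>(UNIV::'n::finite set). (if p = i then X p else if p = j then Y p else 0)) = X i + (Y j :: 'a::comm_monoid_add)"
proof -
  have "(\<Sum>p\<in>UNIV. (if p = i then X p else if p = j then Y p else 0))
      = (\<Sum>p\<in>UNIV. (if p = i then X p else 0) + (if p = j then Y p else 0))"
    by (rule sum.cong) (use assms in auto)
  also have "\<dots> = X i + Y j" by (simp add: sum.distrib)
  finally show ?thesis .
qed

lemma inner2:
  assumes "i \<noteq> j"
  shows "(\<Sum>p\<in>(UNIV::'n::finite set). cnj (if p = i then \<alpha> else if p = j then \<beta> else 0) * (if p = i then \<gamma> else if p = j then \<delta> else 0))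
     = cnj \<alpha> * \<gamma> + cnj \<beta> * \<delta>"
proof -
  have "(\<Sum>p\<in>(UNIV::'n set). cnj (if p = i then \<alpha> else if p = j then \<beta> else 0) * (if p = i then \<gamma> else if p = j then \<delta> else 0))
     = (\<Sum>p\<in>(UNIV::'n set). (if p = i then cnj \<alpha> * \<gamma> else if p = j then cnj \<beta> * \<delta> else 0))"
    by (rule sum.cong) (use assms in auto)
  also have "\<dots> = cnj \<alpha> * \<gamma> + cnj \<beta> * \<delta>" by (rule sum_two[OF assms])
  finally show ?thesis .
qed

lemma inner_e1: "(\<Sum>p\<in>(UNIV::'n::finite set). cnj (if p = k then 1 else 0) * v p) = v k"
proof -
  have "(\<Sum>p\<in>(UNIV::'n::finite set). cnj (if p = k then 1 else 0) * v p) = (\<Sum>p\<in>(UNIV::'n::finite set). if p = k then v p else 0)"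
    by (rule sum.cong) auto
  thus ?thesis by simp
qed

lemma inner_e2: "(\<Sum>p\<in>(UNIV::'n::finite set). cnj (v p) * (if p = k then 1 else 0)) = cnj (v k)"
proof -
  have "(\<Sum>p\<in>(UNIV::'n::finite set). cnj (v p) * (if p = k then 1 else 0)) = (\<Sum>p\<in>(UNIV::'n::finite set). if p = k then cnj (v p) else 0)"
    by (rule sum.cong) auto
  thus ?thesis by simp
qed

lemma rot_col_i: "i \<noteq> j \<Longrightarrow> rot i j a z $ p $ i = (if p = i then of_real a else if p = j then z else 0)"
  by (simp add: rot_def)
lemma rot_col_j: "i \<noteq> j \<Longrightarrow> rot i j a z $ p $ j = (if p = i then - cnj z else if p = j then of_real a else 0)"
  by (simp add: rot_def)
lemma rot_col_k: "k \<noteq> i \<Longrightarrow> k \<noteq> j \<Longrightarrow> rot i j a z $ p $ k = (if p = k then 1 else 0)"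
  by (simp add: rot_def)

lemma rot_unitary:
  assumes ij: "i \<noteq> j" and az: "a^2 + (cmod z)^2 = 1"
  shows "unitary_mat (rot i j a z)"
proof -
  have zz: "cnj z * z = of_real ((cmod z)^2)" using complex_norm_square[of z] by (simp add: mult.commute)
  have az': "complex_of_real a * complex_of_real a + cnj z * z = 1"
    unfolding zz using az by (metis of_real_add of_real_1 of_real_mult power2_eq_square)
  have az'': "cnj z * z + complex_of_real a * complex_of_real a = 1" using az' by (simp add: add.commute)
  show ?thesis
    unfolding unitary_mat_def
  proof (subst vec_eq_iff, intro allI, subst vec_eq_iff, intro allI)
    fix k l
    have e: "(adj (rot i j a z) ** rot i j a z) $ k $ l = (\<Sum>p\<in>UNIV. cnj (rot i j a z $ p $ k) * rot i j a z $ p $ l)"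
      by (simp add: mmult_comp)
    consider "k = i" | "k = j" | "k \<noteq> i \<and> k \<noteq> j" by blast
    note kc = this
    consider "l = i" | "l = j" | "l \<noteq> i \<and> l \<noteq> j" by blast
    note lc = this
    have "(\<Sum>p\<in>UNIV. cnj (rot i j a z $ p $ k) * rot i j a z $ p $ l) = (if k = l then 1 else 0)"
      apply (cases rule: kc; cases rule: lc)
      using ij
      by (simp_all add: rot_col_i[OF ij] rot_col_j[OF ij] rot_col_k inner2[OF ij] inner_e1 inner_e2)
         (auto simp: az' az'' mult.commute[of z])
    thus "(adj (rot i j a z) ** rot i j a z) $ k $ l = mat 1 $ k $ l" by (simp add: e mat_def)
  qed
qed


lemma quad_form: "(adj R ** B ** R)$k$k = (\<Sum>p\<in>UNIV. \<Sum>q\<in>UNIV. cnj (R$p$k) * B$p$q * R$q$k)"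
  by (simp add: mmult_comp sum_distrib_right) (rule sum.swap)

lemma quad2:
  assumes ij: "i \<noteq> j"
  shows "(\<Sum>p\<in>(UNIV::'n::finite set). \<Sum>q\<in>UNIV. cnj (if p = i then \<alpha> else if p = j then \<beta> else 0) * B$p$q * (if q = i then \<alpha> else if q = j then \<beta> else 0))
    = cnj \<alpha> * (B$i$i * \<alpha> + B$i$j * \<beta>) + cnj \<beta> * (B$j$i * \<alpha> + B$j$j * \<beta>)"
proof -
  have inner: "(\<Sum>q\<in>(UNIV::'n set). cnj (if p = i then \<alpha> else if p = j then \<beta> else 0) * B$p$q * (if q = i then \<alpha> else if q = j then \<beta> else 0))
     = (if p = i then cnj \<alpha> * (B$i$i * \<alpha> + B$i$j * \<beta>) else if p = j then cnj \<beta> * (B$j$i * \<alpha> + B$j$j * \<beta>) else 0)" for p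
  proof -
    have "(\<Sum>q\<in>(UNIV::'n set). cnj (if p = i then \<alpha> else if p = j then \<beta> else 0) * B$p$q * (if q = i then \<alpha> else if q = j then \<beta> else 0))
      = (\<Sum>q\<in>(UNIV::'n set). (if q = i then cnj (if p = i then \<alpha> else if p = j then \<beta> else 0) * B$p$i * \<alpha>
           else if q = j then cnj (if p = i then \<alpha> else if p = j then \<beta> else 0) * B$p$j * \<beta> else 0))"
      by (rule sum.cong) (use ij in auto)
    also have "\<dots> = cnj (if p = i then \<alpha> else if p = j then \<beta> else 0) * (B$p$i * \<alpha> + B$p$j * \<beta>)"
      by (simp only: sum_two[OF ij]) (simp add: algebra_simps)
    finally show ?thesis using ij by auto
  qed
  show ?thesis unfolding inner by (rule sum_two[OF ij])
qed

lemma quad_e: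
  "(\<Sum>p\<in>(UNIV::'n::finite set). \<Sum>q\<in>UNIV. cnj (if p = k then 1 else 0) * B$p$q * (if q = k then 1 else 0)) = B$k$k"
proof -
  have "(\<Sum>q\<in>(UNIV::'n set). cnj (if p = k then 1 else 0) * B$p$q * (if q = k then 1 else 0)) = (if p = k then B$k$k else 0)" for p
  proof -
    have "(\<Sum>q\<in>(UNIV::'n set). cnj (if p = k then 1 else 0) * B$p$q * (if q = k then 1 else 0))
        = (\<Sum>q\<in>(UNIV::'n set). if q = k then (if p = k then B$k$k else 0) else 0)"
      by (rule sum.cong) auto
    thus ?thesis by simp
  qed
  thus ?thesis by simp
qed

definition phi :: "('n \<Rightarrow> real) \<Rightarrow> complex^'n^'n \<Rightarrow> real" where
  "phi c X = (\<Sum>k\<in>UNIV. c k * Re (X$k$k))"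

lemma rot_diff:
  assumes ij: "i \<noteq> j" and herm: "adj B = B" and az: "a^2 + (cmod z)^2 = 1"
  shows "phi c (adj (rot i j a z) ** B ** rot i j a z) - phi c B
     = (c i - c j) * ((cmod z)^2 * (Re (B$j$j) - Re (B$i$i)) + 2 * a * Re (z * B$i$j))"
proof -
  let ?R = "rot i j a z"
  let ?C = "adj ?R ** B ** ?R"
  have Bji: "B$j$i = cnj (B$i$j)" using herm by (metis adj_comp)
  have zz: "z * cnj z = of_real ((cmod z)^2)" using complex_norm_square[of z] by simp
  have Ci: "?C$i$i = cnj (of_real a) * (B$i$i * of_real a + B$i$j * z) + cnj z * (B$j$i * of_real a + B$j$j * z)"
    unfolding quad_form rot_col_i[OF ij] by (rule quad2[OF ij])
  have Cj: "?C$j$j = cnj (- cnj z) * (B$i$i * (- cnj z) + B$i$j * of_real a) + cnj (of_real a) * (B$j$i * (- cnj z) + B$j$j * of_real a)"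
    unfolding quad_form rot_col_j[OF ij] by (rule quad2[OF ij])
  have Ck: "?C$k$k = B$k$k" if "k \<noteq> i" "k \<noteq> j" for k
    unfolding quad_form rot_col_k[OF that] by (rule quad_e)
  have a2: "a^2 = 1 - (cmod z)^2" using az by simp
  have zsq: "cmod z * cmod z = Re z * Re z + Im z * Im z"
    using cmod_power2[of z] by (simp add: power2_eq_square)
  have ReCi: "Re (?C$i$i) = a^2 * Re (B$i$i) + (cmod z)^2 * Re (B$j$j) + 2 * a * Re (z * B$i$j)"
    unfolding Ci Bji using az
    by (simp add: algebra_simps power2_eq_square zsq)
  have ReCj: "Re (?C$j$j) = (cmod z)^2 * Re (B$i$i) + a^2 * Re (B$j$j) - 2 * a * Re (z * B$i$j)"
    unfolding Cj Bji using az
    by (simp add: algebra_simps power2_eq_square zsq)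
  have "phi c ?C - phi c B = (\<Sum>k\<in>UNIV. c k * (Re (?C$k$k) - Re (B$k$k)))"
    by (simp add: phi_def sum_subtractf right_diff_distrib)
  also have "\<dots> = (\<Sum>k\<in>UNIV. if k = i then c i * (Re (?C$i$i) - Re (B$i$i)) else if k = j then c j * (Re (?C$j$j) - Re (B$j$j)) else 0)"
    by (rule sum.cong) (auto simp: Ck)
  also have "\<dots> = c i * (Re (?C$i$i) - Re (B$i$i)) + c j * (Re (?C$j$j) - Re (B$j$j))"
    by (rule sum_two[OF ij])
  also have "\<dots> = (c i - c j) * ((cmod z)^2 * (Re (B$j$j) - Re (B$i$i)) + 2 * a * Re (z * B$i$j))"
    unfolding ReCi ReCj a2 by (simp add: algebra_simps)
  finally show ?thesis .
qed


lemma offdiag_zero: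
  assumes herm: "adj B = B" and ij: "i \<noteq> j" and cij: "c i \<noteq> c j"
    and max: "\<And>a z. a^2 + (cmod z)^2 = 1 \<Longrightarrow> phi c (adj (rot i j a z) ** B ** rot i j a z) \<le> phi c B"
  shows "B$i$j = 0"
proof (rule ccontr)
  assume b0: "B$i$j \<noteq> 0"
  define b where "b = B$i$j"
  define \<beta> where "\<beta> = (cmod b)^2"
  define \<delta> where "\<delta> = Re (B$j$j) - Re (B$i$i)"
  define D where "D = c i - c j"
  define s where "s = sgn D"
  define t where "t = 1 / (2 * (cmod b + \<bar>\<delta>\<bar> + 1))"
  define z where "z = complex_of_real (t * s) * cnj b"
  define a where "a = sqrt (1 - (cmod z)^2)"
  have bpos: "cmod b > 0" using b0 by (simp add: b_def)
  have \<beta>pos: "\<beta> > 0" using bpos by (simp add: \<beta>_def)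
  have D0: "D \<noteq> 0" using cij by (simp add: D_def)
  have s1: "\<bar>s\<bar> = 1" using D0 by (simp add: s_def abs_sgn)
  have Ds: "D * s = \<bar>D\<bar>" by (simp add: s_def abs_sgn mult.commute[of D])
  have pos: "cmod b + \<bar>\<delta>\<bar> + 1 > 0" using norm_ge_zero[of b] abs_ge_zero[of \<delta>] by linarith
  have tpos: "t > 0" unfolding t_def using pos by simp
  have tb: "t * cmod b < 1/2"
    unfolding t_def using pos abs_ge_zero[of \<delta>] by (simp add: field_simps)
  have td: "t * \<bar>\<delta>\<bar> < 1/2"
    unfolding t_def using pos bpos by (simp add: field_simps) (smt (verit) norm_ge_zero)
  have cz: "cmod z = t * cmod b" using tpos s1 by (simp add: z_def norm_mult)
  have cz2: "(cmod z)^2 < 1/4"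
  proof -
    have "(cmod z)^2 = (t * cmod b)^2" by (simp add: cz)
    also have "\<dots> < (1/2)^2" using tb tpos bpos by (intro power_strict_mono) auto
    finally show ?thesis by (simp add: power2_eq_square)
  qed
  have az: "a^2 + (cmod z)^2 = 1" using cz2 by (simp add: a_def)
  have ahalf: "a \<ge> 1/2" unfolding a_def
    by (rule real_le_rsqrt) (use cz2 in \<open>simp add: power2_eq_square\<close>)
  have zb: "z * b = complex_of_real (t * s * \<beta>)"
    using complex_norm_square[of b] by (simp add: z_def \<beta>_def mult_ac)
  have Rezb: "Re (z * b) = t * s * \<beta>" by (simp add: zb)
  have diff: "phi c (adj (rot i j a z) ** B ** rot i j a z) - phi c B
      = D * ((cmod z)^2 * \<delta> + 2 * a * (t * s * \<beta>))"
    using rot_diff[OF ij herm az, of c] unfolding b_def[symmetric] Rezb D_def[symmetric] \<delta>_def[symmetric] .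
  also have "\<dots> = t * \<beta> * (D * t * \<delta> + 2 * a * (D * s))"
    by (simp add: cz \<beta>_def power2_eq_square algebra_simps)
  also have "\<dots> = t * \<beta> * (D * t * \<delta> + 2 * a * \<bar>D\<bar>)" by (simp add: Ds)
  finally have diff': "phi c (adj (rot i j a z) ** B ** rot i j a z) - phi c B = t * \<beta> * (D * t * \<delta> + 2 * a * \<bar>D\<bar>)" .
  have "D * \<delta> \<ge> - (\<bar>D\<bar> * \<bar>\<delta>\<bar>)" by (metis abs_ge_minus_self abs_mult minus_le_iff)
  hence "t * (D * \<delta>) \<ge> t * (- (\<bar>D\<bar> * \<bar>\<delta>\<bar>))" using tpos by (intro mult_left_mono) auto
  hence "D * t * \<delta> \<ge> - (\<bar>D\<bar> * (t * \<bar>\<delta>\<bar>))" by (simp add: algebra_simps)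
  moreover have "\<bar>D\<bar> * (t * \<bar>\<delta>\<bar>) \<le> \<bar>D\<bar> * (1/2)" using td by (intro mult_left_mono) auto
  moreover have "1 * \<bar>D\<bar> \<le> (2 * a) * \<bar>D\<bar>" by (rule mult_right_mono) (use ahalf in auto)
  ultimately have "D * t * \<delta> + 2 * a * \<bar>D\<bar> \<ge> \<bar>D\<bar> / 2" by linarith
  hence "D * t * \<delta> + 2 * a * \<bar>D\<bar> > 0" using D0 by linarith
  hence "t * \<beta> * (D * t * \<delta> + 2 * a * \<bar>D\<bar>) > 0" using tpos \<beta>pos by simp
  with diff' max[OF az] show False by linarith
qed


lemma norm_vec_le_sum: "norm (x::'a::real_normed_vector^'n) \<le> (\<Sum>i\<in>UNIV. norm (x$i))"
  unfolding norm_vec_def by (rule L2_set_le_sum) simp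

lemma unitary_set_eq:
  "{U::complex^'n^'n. unitary_mat U} = (\<Inter>k. \<Inter>l. {U. (\<Sum>p\<in>UNIV. cnj (U$p$k) * U$p$l) = mat 1 $ k $ l})"
  by (auto simp: unitary_mat_def vec_eq_iff mmult_comp)

lemma unitary_entry_le:
  assumes "unitary_mat U" shows "cmod (U$p$k) \<le> 1"
proof -
  have "(adj U ** U)$k$k = mat 1 $ k $ k" using assms unfolding unitary_mat_def by simp
  hence "(\<Sum>q\<in>UNIV. cnj (U$q$k) * U$q$k) = 1" by (simp add: mmult_comp mat_def)
  moreover have "(\<Sum>q\<in>UNIV. cnj (U$q$k) * U$q$k) = of_real (\<Sum>q\<in>UNIV. (cmod (U$q$k))^2)"
    unfolding of_real_sum by (rule sum.cong) (simp_all add: complex_norm_square[symmetric] mult.commute del: of_real_power)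
  ultimately have "(\<Sum>q\<in>UNIV. (cmod (U$q$k))^2) = 1" by (metis of_real_eq_1_iff)
  moreover have "(cmod (U$p$k))^2 \<le> (\<Sum>q\<in>UNIV. (cmod (U$q$k))^2)"
    by (rule member_le_sum) auto
  ultimately have "(cmod (U$p$k))^2 \<le> 1^2" by simp
  thus ?thesis by (rule power2_le_imp_le) simp
qed

lemma compact_unitary: "compact {U::complex^'n^'n. unitary_mat U}"
proof (rule compact_eq_bounded_closed[THEN iffD2], rule conjI)
  show "bounded {U::complex^'n^'n. unitary_mat U}"
    unfolding bounded_iff
  proof (intro exI ballI)
    fix U :: "complex^'n^'n" assume "U \<in> {U. unitary_mat U}"
    hence u: "unitary_mat U" by simp
    have "norm U \<le> (\<Sum>p\<in>UNIV. norm (U$p))" by (rule norm_vec_le_sum)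
    also have "\<dots> \<le> (\<Sum>p\<in>UNIV. \<Sum>k\<in>UNIV. norm (U$p$k))" by (intro sum_mono norm_vec_le_sum)
    also have "\<dots> \<le> (\<Sum>p\<in>(UNIV::'n set). \<Sum>k\<in>(UNIV::'n set). 1)"
      by (intro sum_mono unitary_entry_le[OF u])
    finally show "norm U \<le> real (CARD('n) * CARD('n))" by simp
  qed
  show "closed {U::complex^'n^'n. unitary_mat U}"
    unfolding unitary_set_eq
    by (intro closed_INT ballI closed_Collect_eq continuous_intros)
qed

lemma spectral:
  fixes A :: "complex^'n^'n"
  assumes herm: "adj A = A"
  shows "\<exists>U d. unitary_mat U \<and> A = U ** diag_mat (\<lambda>i. complex_of_real (d i)) ** adj U"
proof -
  obtain g :: "'n \<Rightarrow> nat" and n where "inj_on g UNIV"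
    using finite_imp_inj_to_nat_seg[of "UNIV::'n set"] by auto
  define c where "c = (\<lambda>k. real (g k))"
  have cinj: "c i \<noteq> c j" if "i \<noteq> j" for i j
    using \<open>inj_on g UNIV\<close> that by (auto simp: c_def inj_on_def)
  let ?K = "{U::complex^'n^'n. unitary_mat U}"
  let ?F = "\<lambda>U. phi c (adj U ** A ** U)"
  have cont: "continuous_on ?K ?F"
    unfolding phi_def mmult_comp adj_comp by (intro continuous_intros)
  have ne: "?K \<noteq> {}" using unitary_one by blast
  obtain U where U: "unitary_mat U" and Umax: "\<And>V. unitary_mat V \<Longrightarrow> ?F V \<le> ?F U"
    using continuous_attains_sup[OF compact_unitary ne cont] by auto
  define B where "B = adj U ** A ** U"
  have hB: "adj B = B" by (simp add: B_def adj_mult herm matrix_mul_assoc)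
  have off: "B$i$j = 0" if ij: "i \<noteq> j" for i j
  proof (rule offdiag_zero[OF hB ij cinj[OF ij]])
    fix a z assume az: "a^2 + (cmod z)^2 = 1"
    have "adj (rot i j a z) ** B ** rot i j a z = adj (U ** rot i j a z) ** A ** (U ** rot i j a z)"
      by (simp add: B_def adj_mult matrix_mul_assoc)
    also have "phi c \<dots> \<le> phi c B" unfolding B_def
      by (rule Umax, rule unitary_mult[OF U rot_unitary[OF ij az]])
    finally show "phi c (adj (rot i j a z) ** B ** rot i j a z) \<le> phi c B" .
  qed
  have dg: "B = diag_mat (\<lambda>i. complex_of_real (Re (B$i$i)))"
  proof (subst vec_eq_iff, intro allI, subst vec_eq_iff, intro allI)
    fix i j
    show "B$i$j = diag_mat (\<lambda>i. complex_of_real (Re (B$i$i))) $ i $ j"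
    proof (cases "i = j")
      case True
      have "cnj (B$i$i) = B$i$i" using hB by (metis adj_comp)
      hence "Im (cnj (B$i$i)) = Im (B$i$i)" by simp
      hence "Im (B$i$i) = 0" by simp
      thus ?thesis using True by (simp add: complex_eq_iff)
    qed (simp add: off)
  qed
  have "U ** B ** adj U = A"
    by (simp add: B_def matrix_mul_assoc[symmetric] unitary_cancel[OF U] unitary_right[OF U])
  hence "A = U ** diag_mat (\<lambda>i. complex_of_real (Re (B$i$i))) ** adj U" using dg by simp
  thus ?thesis using U by (intro exI[where x=U] exI[where x="\<lambda>i. Re (B$i$i)"] conjI)
qed


lemma cinner_self_sum: "cinner u u = complex_of_real (\<Sum>j\<in>UNIV. (cmod (u$j))^2)"
  unfolding cinner_def of_real_sum
  by (rule sum.cong) (simp_all add: complex_norm_square[symmetric] del: of_real_power)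

lemma diag_quad: "cinner (diag_mat (\<lambda>j. complex_of_real (w j)) *v u) u = complex_of_real (\<Sum>j\<in>UNIV. w j * (cmod (u$j))^2)"
  unfolding cinner_def of_real_sum diag_mvec
  by (rule sum.cong) (simp_all add: complex_norm_square[symmetric] mult.assoc del: of_real_power)

lemma core:
  fixes M :: "complex^'n^'n" and d e :: "'n \<Rightarrow> real" and f g :: "real \<Rightarrow> real"
  assumes MM: "adj M ** M = diag_mat (\<lambda>j. complex_of_real (d j))"
    and comm: "M ** diag_mat (\<lambda>j. complex_of_real (d j)) = diag_mat (\<lambda>j. complex_of_real (e j)) ** M"
    and fg: "\<And>t. t \<ge> 0 \<Longrightarrow> f t * g t = t"
  shows "cmod (cinner (M *v a) b) \<le>
     sqrt (\<Sum>j\<in>UNIV. (f (sqrt (d j)))^2 * (cmod (a$j))^2) * sqrt (\<Sum>i\<in>UNIV. (g (sqrt (e i)))^2 * (cmod (b$i))^2)"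
proof -
  define s where "s = (\<lambda>j. sqrt (d j))"
  define u where "u = diag_mat (\<lambda>j. complex_of_real (f (s j))) *v a"
  define v where "v = diag_mat (\<lambda>i. complex_of_real (g (sqrt (e i)))) *v b"
  define N where "N = (\<chi> i j. M$i$j / complex_of_real (s j))"
  have colnorm: "(\<Sum>i\<in>UNIV. (cmod (M$i$j))^2) = d j" for j
  proof -
    have "(adj M ** M)$j$j = complex_of_real (d j)" using MM by simp
    hence "(\<Sum>i\<in>UNIV. cnj (M$i$j) * M$i$j) = complex_of_real (d j)" by (simp add: mmult_comp)
    moreover have "(\<Sum>i\<in>UNIV. cnj (M$i$j) * M$i$j) = complex_of_real (\<Sum>i\<in>UNIV. (cmod (M$i$j))^2)"
      unfolding of_real_sum by (rule sum.cong) (simp_all add: complex_norm_square[symmetric] mult.commute del: of_real_power)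
    ultimately show ?thesis by (metis of_real_eq_iff)
  qed
  have dpos: "d j \<ge> 0" for j
  proof -
    have "0 \<le> (\<Sum>i\<in>UNIV. (cmod (M$i$j))^2)" by (rule sum_nonneg) simp
    thus ?thesis using colnorm[of j] by simp
  qed
  have entry: "M$i$j = N$i$j * complex_of_real (f (s j)) * complex_of_real (g (sqrt (e i)))" for i j
  proof (cases "M$i$j = 0")
    case True thus ?thesis by (simp add: N_def)
  next
    case False
    have "(M ** diag_mat (\<lambda>j. complex_of_real (d j)))$i$j = (diag_mat (\<lambda>j. complex_of_real (e j)) ** M)$i$j"
      using comm by simp
    hence "M$i$j * complex_of_real (d j) = complex_of_real (e i) * M$i$j"
      by (simp add: mult_diag_left mult_diag_right)
    hence de: "d j = e i" using False by (simp add: mult.commute)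
    have "d j \<noteq> 0"
    proof
      assume "d j = 0"
      hence "(cmod (M$i$j))^2 \<le> 0" using colnorm[of j] member_le_sum[of i UNIV "\<lambda>i. (cmod (M$i$j))^2"] by simp
      thus False using False by simp
    qed
    hence spos: "s j > 0" using dpos[of j] by (simp add: s_def)
    have "f (s j) * g (sqrt (e i)) = s j" using fg[of "s j"] spos de by (simp add: s_def)
    hence "complex_of_real (f (s j)) * complex_of_real (g (sqrt (e i))) = complex_of_real (s j)"
      by (metis of_real_mult)
    thus ?thesis using spos by (simp add: N_def mult.assoc)
  qed
  have uj: "u$j = complex_of_real (f (s j)) * a$j" for j by (simp add: u_def diag_mvec)
  have vi: "v$i = complex_of_real (g (sqrt (e i))) * b$i" for i by (simp add: v_def diag_mvec)
  have row: "(\<Sum>k\<in>UNIV. M$i$k * a$k) = complex_of_real (g (sqrt (e i))) * (\<Sum>k\<in>UNIV. N$i$k * (complex_of_real (f (s k)) * a$k))" for i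
    unfolding sum_distrib_left by (rule sum.cong[OF refl]) (simp only: entry mult_ac)
  have eq1: "cinner (M *v a) b = cinner (N *v u) v"
    unfolding cinner_def mvec_comp uj vi row
    by (rule sum.cong[OF refl]) (simp add: mult_ac)
  have NN: "adj N ** N = diag_mat (\<lambda>j. complex_of_real (if d j = 0 then 0 else 1))"
  proof (subst vec_eq_iff, intro allI, subst vec_eq_iff, intro allI)
    fix j k
    have "(adj N ** N)$j$k = (adj M ** M)$j$k / (complex_of_real (s j) * complex_of_real (s k))"
      by (simp add: mmult_comp N_def sum_divide_distrib)
    also have "\<dots> = diag_mat (\<lambda>j. complex_of_real (if d j = 0 then 0 else 1)) $ j $ k"
    proof (cases "j = k")
      case True
      have "complex_of_real (s j) * complex_of_real (s j) = complex_of_real (d j)"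
        unfolding of_real_mult[symmetric] s_def using dpos[of j] by simp
      thus ?thesis using True MM by simp
    next
      case False
      thus ?thesis using MM by simp
    qed
    finally show "(adj N ** N)$j$k = diag_mat (\<lambda>j. complex_of_real (if d j = 0 then 0 else 1)) $ j $ k" .
  qed
  have nsum: "(norm w)^2 = (\<Sum>j\<in>UNIV. (cmod (w$j))^2)" for w :: "complex^'n"
    using cinner_self_norm[of w] cinner_self_sum[of w] by simp
  have nNu: "(norm (N *v u))^2 \<le> (norm u)^2"
  proof -
    have "(norm (N *v u))^2 = Re (cinner (N *v u) (N *v u))" by (simp add: cinner_self_norm)
    also have "\<dots> = Re (cinner (adj N *v (N *v u)) u)"
      by (metis cinner_adj adj_adj)
    also have "\<dots> = (\<Sum>j\<in>UNIV. (if d j = 0 then 0 else 1) * (cmod (u$j))^2)"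
      by (simp only: matrix_vector_mul_assoc NN diag_quad Re_complex_of_real)
    also have "\<dots> \<le> (\<Sum>j\<in>UNIV. (cmod (u$j))^2)" by (intro sum_mono) auto
    also have "\<dots> = (norm u)^2" by (simp add: nsum)
    finally show ?thesis .
  qed
  have nsum: "(norm w)^2 = (\<Sum>j\<in>UNIV. (cmod (w$j))^2)" for w :: "complex^'n"
    using cinner_self_norm[of w] cinner_self_sum[of w] by simp
  have nu: "(norm u)^2 = (\<Sum>j\<in>UNIV. (f (sqrt (d j)))^2 * (cmod (a$j))^2)"
    unfolding nsum uj by (simp add: s_def norm_mult power_mult_distrib)
  have nv: "(norm v)^2 = (\<Sum>i\<in>UNIV. (g (sqrt (e i)))^2 * (cmod (b$i))^2)"
    unfolding nsum vi by (simp add: norm_mult power_mult_distrib)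
  have c1: "cmod (cinner (M *v a) b) \<le> norm (N *v u) * norm v" unfolding eq1 by (rule cinner_cs)
  have c2: "norm (N *v u) \<le> norm u" using nNu by (rule power2_le_imp_le) simp
  have c3: "norm (N *v u) * norm v \<le> norm u * norm v" by (rule mult_right_mono[OF c2 norm_ge_zero])
  have nu': "norm u = sqrt (\<Sum>j\<in>UNIV. (f (sqrt (d j)))^2 * (cmod (a$j))^2)" by (simp add: nu[symmetric])
  have nv': "norm v = sqrt (\<Sum>i\<in>UNIV. (g (sqrt (e i)))^2 * (cmod (b$i))^2)" by (simp add: nv[symmetric])
  from c1 c3 have "cmod (cinner (M *v a) b) \<le> norm u * norm v" by linarith
  thus ?thesis by (simp only: nu' nv')
qed


lemma quad_link:
  assumes V: "unitary_mat V"
  shows "Re (cinner ((V ** diag_mat (\<lambda>i. complex_of_real (h i)) ** adj V) *v x) x)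
       = (\<Sum>j\<in>UNIV. h j * (cmod ((adj V *v x)$j))^2)"
proof -
  have "(V ** diag_mat (\<lambda>i. complex_of_real (h i)) ** adj V) *v x = V *v (diag_mat (\<lambda>i. complex_of_real (h i)) *v (adj V *v x))"
    by (simp add: matrix_vector_mul_assoc matrix_mul_assoc)
  hence "cinner ((V ** diag_mat (\<lambda>i. complex_of_real (h i)) ** adj V) *v x) x
     = cinner (diag_mat (\<lambda>i. complex_of_real (h i)) *v (adj V *v x)) (adj V *v x)"
    by (simp add: cinner_adj)
  thus ?thesis by (simp add: diag_quad)
qed

lemma herm_AA: "adj (adj S ** S) = adj S ** S"
  by (simp add: adj_mult)

lemma mixed:
  fixes S :: "complex^'n^'n" and f g :: "real \<Rightarrow> real"
  assumes fg: "\<And>t. t \<ge> 0 \<Longrightarrow> f t * g t = t"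
  shows "cmod (cinner (S *v x) y) \<le>
     sqrt (Re (cinner (mat_fun (\<lambda>t. (f t)^2) (mat_abs S) *v x) x))
   * sqrt (Re (cinner (mat_fun (\<lambda>t. (g t)^2) (mat_abs (adj S)) *v y) y))"
proof -
  obtain V d where V: "unitary_mat V" and hV: "adj S ** S = V ** diag_mat (\<lambda>i. complex_of_real (d i)) ** adj V"
    using spectral[OF herm_AA[of S]] by blast
  obtain W e where W: "unitary_mat W" and hW: "S ** adj S = W ** diag_mat (\<lambda>i. complex_of_real (e i)) ** adj W"
    using spectral[OF herm_AA[of "adj S"]] by auto
  define Dd where "Dd = diag_mat (\<lambda>i. complex_of_real (d i))"
  define De where "De = diag_mat (\<lambda>i. complex_of_real (e i))"
  have absS: "mat_abs S = V ** diag_mat (\<lambda>i. complex_of_real (sqrt (d i))) ** adj V"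
    unfolding mat_abs_def by (rule mat_fun_eq[OF V hV])
  have hF: "mat_fun (\<lambda>t. (f t)^2) (mat_abs S) = V ** diag_mat (\<lambda>i. complex_of_real ((f (sqrt (d i)))^2)) ** adj V"
    by (rule mat_fun_eq[OF V absS])
  have absS': "mat_abs (adj S) = W ** diag_mat (\<lambda>i. complex_of_real (sqrt (e i))) ** adj W"
    unfolding mat_abs_def adj_adj by (rule mat_fun_eq[OF W hW])
  have hG: "mat_fun (\<lambda>t. (g t)^2) (mat_abs (adj S)) = W ** diag_mat (\<lambda>i. complex_of_real ((g (sqrt (e i)))^2)) ** adj W"
    by (rule mat_fun_eq[OF W absS'])
  define M where "M = adj W ** S ** V"
  note cV = unitary_cancel[OF V] and cW = unitary_cancel[OF W]
  have hV': "adj S ** (S ** X) = V ** (Dd ** (adj V ** X))" for X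
    using arg_cong[OF hV, of "\<lambda>Y. Y ** X"] by (simp add: Dd_def matrix_mul_assoc)
  have hW': "S ** (adj S ** X) = W ** (De ** (adj W ** X))" for X
    using arg_cong[OF hW, of "\<lambda>Y. Y ** X"] by (simp add: De_def matrix_mul_assoc)
  have MM: "adj M ** M = Dd"
    by (simp add: M_def adj_mult matrix_mul_assoc[symmetric] cW hV' cV V[unfolded unitary_mat_def])
  have MM': "M ** adj M = De"
    by (simp add: M_def adj_mult matrix_mul_assoc[symmetric] cV hW' cW unitary_right[OF V] unitary_right[OF W] W[unfolded unitary_mat_def])
  have comm: "M ** Dd = De ** M"
    unfolding MM[symmetric] MM'[symmetric] by (simp add: matrix_mul_assoc)
  define a where "a = adj V *v x"
  define b where "b = adj W *v y"
  have Ma: "M *v a = adj W *v (S *v x)"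
    by (simp add: M_def a_def matrix_vector_mul_assoc[symmetric] unitary_right[OF V])
      (simp add: matrix_vector_mul_assoc unitary_right[OF V])
  have link: "cinner (S *v x) y = cinner (M *v a) b"
    unfolding Ma b_def cinner_adj adj_adj
    by (simp add: matrix_vector_mul_assoc unitary_right[OF W])
  have "cmod (cinner (M *v a) b) \<le>
     sqrt (\<Sum>j\<in>UNIV. (f (sqrt (d j)))^2 * (cmod (a$j))^2) * sqrt (\<Sum>i\<in>UNIV. (g (sqrt (e i)))^2 * (cmod (b$i))^2)"
    by (rule core[OF MM[unfolded Dd_def] comm[unfolded Dd_def De_def] fg])
  thus ?thesis unfolding link hF hG quad_link[OF V] quad_link[OF W] a_def b_def .
qed


lemma quad_nonneg:
  fixes S :: "complex^'n^'n"
  shows "Re (cinner (mat_fun (\<lambda>t. (h t)^2) (mat_abs S) *v x) x) \<ge> 0"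
proof -
  obtain V d where V: "unitary_mat V" and hV: "adj S ** S = V ** diag_mat (\<lambda>i. complex_of_real (d i)) ** adj V"
    using spectral[OF herm_AA[of S]] by blast
  have absS: "mat_abs S = V ** diag_mat (\<lambda>i. complex_of_real (sqrt (d i))) ** adj V"
    unfolding mat_abs_def by (rule mat_fun_eq[OF V hV])
  have hF: "mat_fun (\<lambda>t. (h t)^2) (mat_abs S) = V ** diag_mat (\<lambda>i. complex_of_real ((h (sqrt (d i)))^2)) ** adj V"
    by (rule mat_fun_eq[OF V absS])
  show ?thesis unfolding hF quad_link[OF V] by (intro sum_nonneg) simp
qed

lemma cs2:
  fixes p1 p2 q1 q2 :: real
  shows "p1 * q1 + p2 * q2 \<le> sqrt (p1^2 + p2^2) * sqrt (q1^2 + q2^2)"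
proof -
  have "(p1 * q1 + p2 * q2)^2 \<le> (p1^2 + p2^2) * (q1^2 + q2^2)"
  proof -
    have "(p1^2 + p2^2) * (q1^2 + q2^2) - (p1 * q1 + p2 * q2)^2 = (p1 * q2 - p2 * q1)^2"
      by (simp add: power2_eq_square algebra_simps)
    thus ?thesis by (metis diff_ge_0_iff_ge zero_le_power2)
  qed
  hence "sqrt ((p1 * q1 + p2 * q2)^2) \<le> sqrt ((p1^2 + p2^2) * (q1^2 + q2^2))"
    by (rule real_sqrt_le_mono)
  thus ?thesis by (simp add: real_sqrt_mult)
qed

lemma final_ineq:
  fixes a1 a2 b1 b2 :: real
  assumes "a1 \<ge> 0" "a2 \<ge> 0" "b1 \<ge> 0" "b2 \<ge> 0"
  shows "sqrt a1 * sqrt b1 + sqrt a2 * sqrt b2 \<le> sqrt ((a1 + a2) * (b2 + b1))"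
  using cs2[of "sqrt a1" "sqrt b1" "sqrt a2" "sqrt b2"] assms
  by (simp add: real_sqrt_mult add.commute)

lemma re_part_mv: "re_part T *v x = (1/2) *s (T *v x + adj T *v x)"
  by (simp add: vec_eq_iff re_part_def mvec_comp sum_divide_distrib[symmetric] sum.distrib[symmetric] distrib_right)

lemma im_part_mv: "im_part T *v x = (1/(2*\<i>)) *s (T *v x - adj T *v x)"
proof -
  have "(im_part T *v x)$i = ((1/(2*\<i>)) *s (T *v x - adj T *v x))$i" for i
  proof -
    have "((1/(2*\<i>)) *s (T *v x - adj T *v x))$i = (1/(2*\<i>)) * ((\<Sum>k\<in>UNIV. T$i$k*x$k) - (\<Sum>k\<in>UNIV. cnj(T$k$i)*x$k))"
      by (simp only: vector_scalar_mult_def vec_lambda_beta vector_minus_component mvec_comp adj_comp)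
    also have "\<dots> = (\<Sum>k\<in>UNIV. (1/(2*\<i>)) * (T$i$k*x$k - cnj(T$k$i)*x$k))"
      by (simp only: sum_subtractf sum_distrib_left right_diff_distrib)
    also have "\<dots> = (\<Sum>k\<in>UNIV. (T$i$k - cnj(T$k$i))/(2*\<i>) * x$k)"
      by (rule sum.cong) (simp_all add: field_simps)
    also have "\<dots> = (im_part T *v x)$i" by (simp add: mvec_comp im_part_def)
    finally show ?thesis ..
  qed
  thus ?thesis by (simp add: vec_eq_iff)
qed

theorem theorem3p8:
  fixes T :: "complex^'n^'n" and f g :: "real \<Rightarrow> real"
  assumes "continuous_on {0..} f" and "continuous_on {0..} g"
    and "\<And>t. t \<ge> 0 \<Longrightarrow> f t \<ge> 0" and "\<And>t. t \<ge> 0 \<Longrightarrow> g t \<ge> 0"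
    and "\<And>t. t \<ge> 0 \<Longrightarrow> f t * g t = t"
  shows "\<forall>x y :: complex^'n.
     cmod (cinner (re_part T *v x) y) \<le> 1/2 * sqrt (
       Re (cinner ((mat_fun (\<lambda>t. (f t)^2) (mat_abs T) + mat_fun (\<lambda>t. (f t)^2) (mat_abs (adj T))) *v x) x)
     * Re (cinner ((mat_fun (\<lambda>t. (g t)^2) (mat_abs T) + mat_fun (\<lambda>t. (g t)^2) (mat_abs (adj T))) *v y) y))
   \<and> cmod (cinner (im_part T *v x) y) \<le> 1/2 * sqrt (
       Re (cinner ((mat_fun (\<lambda>t. (f t)^2) (mat_abs T) + mat_fun (\<lambda>t. (f t)^2) (mat_abs (adj T))) *v x) x)
     * Re (cinner ((mat_fun (\<lambda>t. (g t)^2) (mat_abs T) + mat_fun (\<lambda>t. (g t)^2) (mat_abs (adj T))) *v y) y))"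
proof (intro allI)
  fix x y :: "complex^'n"
  define F1 where "F1 = mat_fun (\<lambda>t. (f t)^2) (mat_abs T)"
  define F2 where "F2 = mat_fun (\<lambda>t. (f t)^2) (mat_abs (adj T))"
  define G1 where "G1 = mat_fun (\<lambda>t. (g t)^2) (mat_abs T)"
  define G2 where "G2 = mat_fun (\<lambda>t. (g t)^2) (mat_abs (adj T))"
  define a1 where "a1 = Re (cinner (F1 *v x) x)"
  define a2 where "a2 = Re (cinner (F2 *v x) x)"
  define b1 where "b1 = Re (cinner (G2 *v y) y)"
  define b2 where "b2 = Re (cinner (G1 *v y) y)"
  have nn: "a1 \<ge> 0" "a2 \<ge> 0" "b1 \<ge> 0" "b2 \<ge> 0"
    unfolding a1_def a2_def b1_def b2_def F1_def F2_def G1_def G2_def by (rule quad_nonneg)+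
  have m1: "cmod (cinner (T *v x) y) \<le> sqrt a1 * sqrt b1"
    unfolding a1_def b1_def F1_def G2_def by (rule mixed) (rule assms(5))
  have m2: "cmod (cinner (adj T *v x) y) \<le> sqrt a2 * sqrt b2"
    using mixed[of f g "adj T" x y] assms(5) unfolding a2_def b2_def F2_def G1_def adj_adj by blast
  have sum: "cmod (cinner (T *v x) y) + cmod (cinner (adj T *v x) y) \<le> sqrt ((a1 + a2) * (b2 + b1))"
    using m1 m2 final_ineq[OF nn] by linarith
  have RHS: "Re (cinner ((F1 + F2) *v x) x) * Re (cinner ((G1 + G2) *v y) y) = (a1 + a2) * (b2 + b1)"
    by (simp add: a1_def a2_def b1_def b2_def matrix_vector_mult_add_rdistrib cinner_add_left)
  have re: "cmod (cinner (re_part T *v x) y) \<le> 1/2 * sqrt ((a1 + a2) * (b2 + b1))"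
  proof -
    have "cinner (re_part T *v x) y = (1/2) * (cinner (T *v x) y + cinner (adj T *v x) y)"
      by (simp only: re_part_mv cinner_scale_left cinner_add_left)
    hence "cmod (cinner (re_part T *v x) y) = cmod ((1/2) * (cinner (T *v x) y + cinner (adj T *v x) y))"
      by (rule arg_cong)
    also have "\<dots> = 1/2 * cmod (cinner (T *v x) y + cinner (adj T *v x) y)"
      by (simp only: norm_mult) (simp add: norm_divide)
    also have "\<dots> \<le> 1/2 * (cmod (cinner (T *v x) y) + cmod (cinner (adj T *v x) y))"
      by (intro mult_left_mono norm_triangle_ineq) simp
    also have "\<dots> \<le> 1/2 * sqrt ((a1 + a2) * (b2 + b1))" by (rule mult_left_mono[OF sum]) simp
    finally show ?thesis .
  qed
  have im: "cmod (cinner (im_part T *v x) y) \<le> 1/2 * sqrt ((a1 + a2) * (b2 + b1))"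
  proof -
    have "cinner (im_part T *v x) y = (1/(2*\<i>)) * (cinner (T *v x) y - cinner (adj T *v x) y)"
      by (simp only: im_part_mv cinner_scale_left cinner_diff_left)
    hence "cmod (cinner (im_part T *v x) y) = 1/2 * cmod (cinner (T *v x) y - cinner (adj T *v x) y)"
      by (simp add: norm_mult norm_divide)
    also have "\<dots> \<le> 1/2 * (cmod (cinner (T *v x) y) + cmod (cinner (adj T *v x) y))"
      by (intro mult_left_mono norm_triangle_ineq4) simp
    also have "\<dots> \<le> 1/2 * sqrt ((a1 + a2) * (b2 + b1))" by (rule mult_left_mono[OF sum]) simp
    finally show ?thesis .
  qed
  show "cmod (cinner (re_part T *v x) y) \<le> 1/2 * sqrt (
       Re (cinner ((mat_fun (\<lambda>t. (f t)^2) (mat_abs T) + mat_fun (\<lambda>t. (f t)^2) (mat_abs (adj T))) *v x) x)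
     * Re (cinner ((mat_fun (\<lambda>t. (g t)^2) (mat_abs T) + mat_fun (\<lambda>t. (g t)^2) (mat_abs (adj T))) *v y) y))
   \<and> cmod (cinner (im_part T *v x) y) \<le> 1/2 * sqrt (
       Re (cinner ((mat_fun (\<lambda>t. (f t)^2) (mat_abs T) + mat_fun (\<lambda>t. (f t)^2) (mat_abs (adj T))) *v x) x)
     * Re (cinner ((mat_fun (\<lambda>t. (g t)^2) (mat_abs T) + mat_fun (\<lambda>t. (g t)^2) (mat_abs (adj T))) *v y) y))"
    using re im RHS unfolding F1_def F2_def G1_def G2_def by simp
qed

end
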